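(* The only cell-preserving, decoration-preserving automorphism of the decorated combinatorial tiling $K$ is the identity map.
   Context: $K$ is the decorated combinatorial tiling: a 2-dimensional CW-complex homeomorphic to the open disk, built as follows. A decorated pentagon has boundary vertices $v_1,\dots,v_5$ in cyclic order (indices mod 5) with corner labels $1,\dots,5$, corner $v_i$ labelled $i$. The rule $\omega$ adds a vertex $m_i$ inside each edge $v_iv_{i+1}$, interior vertices $c_1,\dots,c_5$, edges $c_ic_{i+1}$, $c_im_i$, and replaces the face by the central pentagon $c_1\cdots c_5$ (label $i+1$ at $c_i$) and petals $v_i\,m_i\,c_i\,c_{i-1}\,m_{i-1}$ with labels $i,i+1,i+2,i+3,i+4$ (mod 5) at these corners. $K_0$ is one decorated pentagon, $K_n=\omega^n(K_0)$, $K_n$ embeds label-preservingly onto the central superpentagon $\omega^n(\text{central face of }\omega(K_0))$ of $K_{n+1}$, and $K$ is the direct limit. Decoration-preserving means corner labels are preserved. *)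

theory Defs
  imports Main
begin

text \<open>
Corner labels 1..5 are encoded modulo 5 as 0..4 (label 5 is encoded as 0), so that
"indices mod 5" is literally arithmetic mod 5.  Every face carries the labels
0,1,2,3,4 at its corners in cyclic (counterclockwise) order; corner l of a face is its
corner labelled l, and side s of a face is the edge from corner s to corner (s+1) mod 5.

Faces of K_n are words of length n over {0,...,5}: the letters are read from the
coarsest subdivision step to the finest; letter i < 5 means "petal i" (the petal at
the old vertex v_i, i.e. v_i m_i c_i c_(i-1) m_(i-1)) and letter 5 means "central
pentagon".  The embedding K_n -> K_(n+1) onto the central
superpentagon is w |-> 5 # w.

Corners are pairs (w, l), sides are pairs (w, s).
\<close>

definition wword :: "nat \<Rightarrow> nat list \<Rightarrow> bool" where
  "wword n w \<longleftrightarrow> length w = n \<and> (\<forall>x\<in>set w. x < 6)"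

text \<open>Gluing of sides in K_n (each interior side is glued, reversing orientation, to
exactly one other side).\<close>

inductive glued :: "nat \<Rightarrow> nat list \<times> nat \<Rightarrow> nat list \<times> nat \<Rightarrow> bool" where
  g_sym: "glued n a b \<Longrightarrow> glued n b a"
| g_old: "glued n (u, s) (u', s') \<Longrightarrow>
     glued (Suc n) (u @ [s], s) (u' @ [(s' + 1) mod 5], s')"
| g_cen: "wword n u \<Longrightarrow> j < 5 \<Longrightarrow>
     glued (Suc n) (u @ [5], (j + 1) mod 5) (u @ [(j + 1) mod 5], (j + 3) mod 5)"
| g_pet: "wword n u \<Longrightarrow> i < 5 \<Longrightarrow>
     glued (Suc n) (u @ [i], (i + 1) mod 5) (u @ [(i + 1) mod 5], (i + 4) mod 5)"

text \<open>Identification of corners in K_n (corners that are the same vertex).\<close>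

inductive vglue :: "nat \<Rightarrow> nat list \<times> nat \<Rightarrow> nat list \<times> nat \<Rightarrow> bool" where
  v_refl: "wword n w \<Longrightarrow> l < 5 \<Longrightarrow> vglue n (w, l) (w, l)"
| v_sym: "vglue n a b \<Longrightarrow> vglue n b a"
| v_trans: "vglue n a b \<Longrightarrow> vglue n b c \<Longrightarrow> vglue n a c"
| v_old: "vglue n (u, l) (u', l') \<Longrightarrow> vglue (Suc n) (u @ [l], l) (u' @ [l'], l')"
| v_mid: "glued n (u, s) (u', s') \<Longrightarrow>
     vglue (Suc n) (u @ [s], (s + 1) mod 5) (u' @ [s'], (s' + 1) mod 5)"
| v_m: "wword n u \<Longrightarrow> j < 5 \<Longrightarrow>
     vglue (Suc n) (u @ [j], (j + 1) mod 5) (u @ [(j + 1) mod 5], j)"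
| v_c1: "wword n u \<Longrightarrow> j < 5 \<Longrightarrow>
     vglue (Suc n) (u @ [5], (j + 1) mod 5) (u @ [j], (j + 2) mod 5)"
| v_c2: "wword n u \<Longrightarrow> j < 5 \<Longrightarrow>
     vglue (Suc n) (u @ [5], (j + 1) mod 5) (u @ [(j + 1) mod 5], (j + 4) mod 5)"

text \<open>Direct limit: lift a corner/side of K_m to level n \<ge> m via the central embeddings.\<close>

definition liftc :: "nat \<Rightarrow> nat list \<times> nat \<Rightarrow> nat list \<times> nat" where
  "liftc n c = (replicate (n - length (fst c)) 5 @ fst c, snd c)"

definition vrelK :: "nat list \<times> nat \<Rightarrow> nat list \<times> nat \<Rightarrow> bool" where
  "vrelK a b \<longleftrightarrow> (\<exists>n. length (fst a) \<le> n \<and> length (fst b) \<le> n \<and>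
                       vglue n (liftc n a) (liftc n b))"

definition erelK :: "nat list \<times> nat \<Rightarrow> nat list \<times> nat \<Rightarrow> bool" where
  "erelK a b \<longleftrightarrow> (\<exists>n. length (fst a) \<le> n \<and> length (fst b) \<le> n \<and>
       ((liftc n a = liftc n b \<and> wword n (fst (liftc n a)) \<and> snd a < 5)
        \<or> glued n (liftc n a) (liftc n b)))"

text \<open>Cells of K.  Faces: words over {0..5} with no leading central letter 5
(canonical representatives modulo w ~ 5 # w).  Vertices: classes of corners.
Edges: classes of sides.\<close>

definition KF :: "nat list set" where
  "KF = {w. (\<forall>x\<in>set w. x < 6) \<and> (w = [] \<or> hd w \<noteq> 5)}"

definition vcls :: "nat list \<times> nat \<Rightarrow> (nat list \<times> nat) set" where
  "vcls a = {b. vrelK a b}"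

definition ecls :: "nat list \<times> nat \<Rightarrow> (nat list \<times> nat) set" where
  "ecls a = {b. erelK a b}"

definition KV :: "(nat list \<times> nat) set set" where
  "KV = {vcls (f, l) | f l. f \<in> KF \<and> l < 5}"

definition KE :: "(nat list \<times> nat) set set" where
  "KE = {ecls (f, s) | f s. f \<in> KF \<and> s < 5}"

definition corner :: "nat list \<Rightarrow> nat \<Rightarrow> (nat list \<times> nat) set" where
  "corner f l = vcls (f, l)"

definition incVF :: "(nat list \<times> nat) set \<Rightarrow> nat list \<Rightarrow> bool" where
  "incVF v f \<longleftrightarrow> (\<exists>l<5. v = corner f l)"

definition incEF :: "(nat list \<times> nat) set \<Rightarrow> nat list \<Rightarrow> bool" where
  "incEF e f \<longleftrightarrow> (\<exists>s<5. e = ecls (f, s))"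

definition incVE :: "(nat list \<times> nat) set \<Rightarrow> (nat list \<times> nat) set \<Rightarrow> bool" where
  "incVE v e \<longleftrightarrow> (\<exists>f s. f \<in> KF \<and> s < 5 \<and> e = ecls (f, s) \<and>
                     (v = vcls (f, s) \<or> v = vcls (f, (s + 1) mod 5)))"

definition cell_aut ::
  "((nat list \<times> nat) set \<Rightarrow> (nat list \<times> nat) set) \<Rightarrow>
   ((nat list \<times> nat) set \<Rightarrow> (nat list \<times> nat) set) \<Rightarrow> (nat list \<Rightarrow> nat list) \<Rightarrow> bool" where
  "cell_aut \<phi>V \<phi>E \<phi>F \<longleftrightarrow>
     bij_betw \<phi>V KV KV \<and> bij_betw \<phi>E KE KE \<and> bij_betw \<phi>F KF KF \<and>
     (\<forall>v\<in>KV. \<forall>e\<in>KE. incVE v e \<longleftrightarrow> incVE (\<phi>V v) (\<phi>E e)) \<and>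
     (\<forall>e\<in>KE. \<forall>f\<in>KF. incEF e f \<longleftrightarrow> incEF (\<phi>E e) (\<phi>F f)) \<and>
     (\<forall>v\<in>KV. \<forall>f\<in>KF. incVF v f \<longleftrightarrow> incVF (\<phi>V v) (\<phi>F f))"

definition decoration_preserving ::
  "((nat list \<times> nat) set \<Rightarrow> (nat list \<times> nat) set) \<Rightarrow> (nat list \<Rightarrow> nat list) \<Rightarrow> bool" where
  "decoration_preserving \<phi>V \<phi>F \<longleftrightarrow>
     (\<forall>f\<in>KF. \<forall>l<5. \<phi>V (corner f l) = corner (\<phi>F f) l)"

end

theory Submission
  imports Defs
begin


lemma less5E: "(x::nat) < 5 \<Longrightarrow> (x = 0 \<Longrightarrow> P) \<Longrightarrow> (x = 1 \<Longrightarrow> P) \<Longrightarrow> (x = 2 \<Longrightarrow> P)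
   \<Longrightarrow> (x = 3 \<Longrightarrow> P) \<Longrightarrow> (x = 4 \<Longrightarrow> P) \<Longrightarrow> P"
  by linarith



lemma glued_wf: "glued n a b \<Longrightarrow> wword n (fst a) \<and> wword n (fst b) \<and> snd a < 5 \<and> snd b < 5"
  by (induction rule: glued.induct) (auto simp: wword_def)

lemma vglue_wf: "vglue n a b \<Longrightarrow> wword n (fst a) \<and> wword n (fst b) \<and> snd a < 5 \<and> snd b < 5"
proof (induction rule: vglue.induct)
  case (v_mid n u s u' s')
  then show ?case using glued_wf[OF v_mid] by (auto simp: wword_def)
qed (auto simp: wword_def)

lemma glued_ends: "glued n a b \<Longrightarrow>
   vglue n a (fst b, (snd b + 1) mod 5) \<and> vglue n (fst a, (snd a + 1) mod 5) b"
proof (induction rule: glued.induct)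
  case (g_sym n a b)
  then show ?case by (auto intro: vglue.v_sym)
next
  case (g_old n u s u' s')
  have wf: "wword n u'" "s' < 5" using glued_wf[OF g_old.hyps] by auto
  have 1: "vglue (Suc n) (u @ [s], s) (u' @ [(s' + 1) mod 5], (s' + 1) mod 5)"
    using vglue.v_old[OF conjunct1[OF g_old.IH[simplified]]] by simp
  have 2: "vglue (Suc n) (u @ [s], (s+1) mod 5) (u' @ [s'], (s' + 1) mod 5)"
    using vglue.v_mid[OF g_old.hyps] .
  have 3: "vglue (Suc n) (u' @ [s'], (s' + 1) mod 5) (u' @ [(s' + 1) mod 5], s')"
    using vglue.v_m[OF wf] .
  show ?case using 1 vglue.v_trans[OF 2 3] by simp
next
  case (g_cen n u j)
  have 1: "vglue (Suc n) (u @ [5], (j + 1) mod 5) (u @ [(j + 1) mod 5], (j + 4) mod 5)"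
    using vglue.v_c2[OF g_cen] .
  have 2: "vglue (Suc n) (u @ [5], ((j+1) mod 5 + 1) mod 5) (u @ [(j + 1) mod 5], ((j+1) mod 5 + 2) mod 5)"
    using vglue.v_c1[OF g_cen(1), of "(j+1) mod 5"] by simp
  have a: "((j + 3) mod 5 + 1) mod 5 = (j+4) mod 5" "((j+1) mod 5 + 2) mod 5 = (j+3) mod 5" using g_cen(2) by (elim less5E; simp)+
  show ?case using 1 2 a by simp
next
  case (g_pet n u i)
  have 1: "vglue (Suc n) (u @ [i], (i + 1) mod 5) (u @ [(i + 1) mod 5], i)"
    using vglue.v_m[OF g_pet] .
  have 2: "vglue (Suc n) (u @ [5], (i + 1) mod 5) (u @ [i], (i + 2) mod 5)"
    using vglue.v_c1[OF g_pet] .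
  have 3: "vglue (Suc n) (u @ [5], (i + 1) mod 5) (u @ [(i + 1) mod 5], (i + 4) mod 5)"
    using vglue.v_c2[OF g_pet] .
  have a: "((i + 4) mod 5 + 1) mod 5 = i" "((i+1) mod 5 + 1) mod 5 = (i+2) mod 5" using g_pet(2) by (elim less5E; simp)+
  have 4: "vglue (Suc n) (u @ [i], (i + 2) mod 5) (u @ [(i + 1) mod 5], (i + 4) mod 5)"
    by (rule vglue.v_trans[OF vglue.v_sym[OF 2] 3])
  show ?case using 1 4 a by simp
qed

lemma glued_lift5: "glued n a b \<Longrightarrow> glued (Suc n) (5 # fst a, snd a) (5 # fst b, snd b)"
proof (induction rule: glued.induct)
  case (g_sym n a b) show ?case by (rule glued.g_sym[OF g_sym.IH])
next
  case (g_old n u s u' s')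
  then show ?case using glued.g_old[OF g_old.IH[simplified]] by simp
next
  case (g_cen n u j)
  have "wword (Suc n) (5#u)" using g_cen by (auto simp: wword_def)
  then show ?case using glued.g_cen[of "Suc n" "5#u" j] g_cen by simp
next
  case (g_pet n u i)
  have "wword (Suc n) (5#u)" using g_pet by (auto simp: wword_def)
  then show ?case using glued.g_pet[of "Suc n" "5#u" i] g_pet by simp
qed

lemma vglue_lift5: "vglue n a b \<Longrightarrow> vglue (Suc n) (5 # fst a, snd a) (5 # fst b, snd b)"
proof (induction rule: vglue.induct)
  case (v_refl n w l)
  have "wword (Suc n) (5#w)" using v_refl by (auto simp: wword_def)
  then show ?case using vglue.v_refl v_refl by simp
next
  case (v_sym n a b) show ?case by (rule vglue.v_sym[OF v_sym.IH])
next
  case (v_trans n a b c) then show ?case by (metis vglue.v_trans)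
next
  case (v_old n u l u' l')
  then show ?case using vglue.v_old[OF v_old.IH[simplified]] by simp
next
  case (v_mid n u s u' s')
  then show ?case using vglue.v_mid[OF glued_lift5[OF v_mid, simplified]] by simp
next
  case (v_m n u j)
  have "wword (Suc n) (5#u)" using v_m by (auto simp: wword_def)
  then show ?case using vglue.v_m[of "Suc n" "5#u" j] v_m by simp
next
  case (v_c1 n u j)
  have "wword (Suc n) (5#u)" using v_c1 by (auto simp: wword_def)
  then show ?case using vglue.v_c1[of "Suc n" "5#u" j] v_c1 by simp
next
  case (v_c2 n u j)
  have "wword (Suc n) (5#u)" using v_c2 by (auto simp: wword_def)
  then show ?case using vglue.v_c2[of "Suc n" "5#u" j] v_c2 by simp
qed

lemma vglue0: "vglue n a b \<Longrightarrow> n = 0 \<Longrightarrow> a = b"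
  by (induction rule: vglue.induct) auto




lemma modne[simp]:
  "x < 5 \<Longrightarrow> Suc x mod 5 \<noteq> x" "x < 5 \<Longrightarrow> x \<noteq> Suc x mod 5"
  "x < 5 \<Longrightarrow> (x+2) mod 5 \<noteq> x" "x < 5 \<Longrightarrow> x \<noteq> (x+2) mod 5"
  "x < 5 \<Longrightarrow> (x+3) mod 5 \<noteq> x" "x < 5 \<Longrightarrow> x \<noteq> (x+3) mod 5"
  "x < 5 \<Longrightarrow> (x+4) mod 5 \<noteq> x" "x < 5 \<Longrightarrow> x \<noteq> (x+4) mod 5"
  by (elim less5E; simp)+

definition oldc :: "nat list \<times> nat \<Rightarrow> bool" where
  "oldc c = (fst c \<noteq> [] \<and> last (fst c) = snd c)"

lemma oldc_inv: "vglue n a b \<Longrightarrow> oldc a = oldc b"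
proof (induction rule: vglue.induct)
  case (v_mid n u s u' s')
  then show ?case using glued_wf[OF v_mid] by (auto simp: oldc_def)
next
  case (v_c1 n u j)
  from v_c1(2) show ?case by (elim less5E) (simp_all add: oldc_def)
next
  case (v_c2 n u j)
  from v_c2(2) show ?case by (elim less5E) (simp_all add: oldc_def)
qed (auto simp: oldc_def)

lemma vglue_down: "vglue N a b \<Longrightarrow> N = Suc n \<Longrightarrow> oldc a \<Longrightarrow>
   vglue n (butlast (fst a), snd a) (butlast (fst b), snd b)"
proof (induction arbitrary: n rule: vglue.induct)
  case (v_refl N w l)
  then have "wword n (butlast w)" by (auto simp: wword_def oldc_def dest: in_set_butlastD)
  then show ?case using v_refl vglue.v_refl by auto
next
  case (v_sym N a b)
  then show ?case using oldc_inv[OF v_sym.hyps] vglue.v_sym by metis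
next
  case (v_trans N a b c)
  then show ?case using oldc_inv[OF v_trans.hyps(1)] vglue.v_trans by metis
next
  case (v_old n u l u' l')
  then show ?case by simp
next
  case (v_mid n u s u' s')
  then show ?case using glued_wf[OF v_mid(1)] by (auto simp: oldc_def)
qed (auto simp: oldc_def)

definition stripT :: "nat \<Rightarrow> nat list \<Rightarrow> nat list" where
  "stripT l w = rev (dropWhile (\<lambda>x. x = l) (rev w))"

definition canon :: "nat list \<Rightarrow> nat list" where
  "canon u = dropWhile (\<lambda>x. x = 5) u"

definition InvW :: "nat list \<Rightarrow> nat \<Rightarrow> (nat list \<times> nat) option" where
  "InvW w' l = (if w' = [] then Some ([], (l+4) mod 5) else
     (let a = last w'; u = canon (butlast w') in
      if a = 5 then Some (u, (l+4) mod 5)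
      else if l = (a+2) mod 5 then Some (u, a)
      else if l = (a+3) mod 5 then Some (u, (a+4) mod 5) else None))"

definition Inv :: "nat list \<times> nat \<Rightarrow> (nat list \<times> nat) option" where
  "Inv c = InvW (stripT (snd c) (fst c)) (snd c)"

lemma stripT_same[simp]: "stripT l (w @ [l]) = stripT l w"
  by (simp add: stripT_def)

lemma stripT_diff[simp]: "a \<noteq> l \<Longrightarrow> stripT l (w @ [a]) = w @ [a]"
  by (simp add: stripT_def)

lemma Inv_snoc: "a \<noteq> l \<Longrightarrow> Inv (x @ [a], l) =
  (if a = 5 then Some (canon x, (l+4) mod 5)
   else if l = (a+2) mod 5 then Some (canon x, a)
   else if l = (a+3) mod 5 then Some (canon x, (a+4) mod 5) else None)"
  by (simp add: Inv_def InvW_def Let_def)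

lemma Inv_old[simp]: "Inv (x @ [l], l) = Inv (x, l)"
  by (simp add: Inv_def)

lemma Inv_inv: "vglue n a b \<Longrightarrow> Inv a = Inv b"
proof (induction rule: vglue.induct)
  case (v_mid n u s u' s')
  have "s < 5" "s' < 5" using glued_wf[OF v_mid] by auto
  then show ?case by (elim less5E; elim less5E) (simp_all add: Inv_snoc)
next
  case (v_m n u j)
  from v_m(2) show ?case by (elim less5E) (simp_all add: Inv_snoc)
next
  case (v_c1 n u j)
  from v_c1(2) show ?case by (elim less5E) (simp_all add: Inv_snoc)
next
  case (v_c2 n u j)
  from v_c2(2) show ?case by (elim less5E) (simp_all add: Inv_snoc)
qed auto

definition Vc :: "nat \<Rightarrow> nat list \<times> nat \<Rightarrow> (nat list \<times> nat) set" where
  "Vc n c = {d. vglue n c d}"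

lemma Vc_eq: "vglue n c d \<Longrightarrow> Vc n c = Vc n d"
  unfolding Vc_def using vglue.v_trans vglue.v_sym by blast

lemma Vc_eqD: "Vc n c = Vc n d \<Longrightarrow> wword n (fst d) \<Longrightarrow> snd d < 5 \<Longrightarrow> vglue n c d"
  unfolding Vc_def using vglue.v_refl[of n "fst d" "snd d"] by auto

definition MInv :: "nat \<Rightarrow> nat list \<times> nat \<Rightarrow> (nat list \<times> nat) set set" where
  "MInv n c = (if fst c \<noteq> [] \<and> last (fst c) < 5 \<and> snd c = (last (fst c) + 1) mod 5
     then {Vc n (butlast (fst c), last (fst c)), Vc n (butlast (fst c), snd c)}
     else if fst c \<noteq> [] \<and> last (fst c) < 5 \<and> snd c = (last (fst c) + 4) mod 5
     then {Vc n (butlast (fst c), snd c), Vc n (butlast (fst c), last (fst c))}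
     else {})"

lemma MInv_inv: "vglue N a b \<Longrightarrow> N = Suc n \<Longrightarrow> MInv n a = MInv n b"
proof (induction arbitrary: n rule: vglue.induct)
  case (v_old N u l u' l')
  have "l < 5" "l' < 5" using vglue_wf[OF v_old(1)] by auto
  then show ?case by (elim less5E; elim less5E) (simp_all add: MInv_def)
next
  case (v_mid N u s u' s')
  have w: "s < 5" "s' < 5" using glued_wf[OF v_mid(1)] by auto
  have e: "Vc n (u, s) = Vc n (u', (s'+1) mod 5)" "Vc n (u, (s+1) mod 5) = Vc n (u', s')"
    using glued_ends[OF v_mid(1)] v_mid(2) Vc_eq by auto
  have "(s+1) mod 5 \<noteq> (s+4) mod 5" "(s'+1) mod 5 \<noteq> (s'+4) mod 5" using w by (elim less5E; simp)+
  then show ?case using w e v_mid(2) by (auto simp: MInv_def)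
next
  case (v_m N u j)
  have "j \<noteq> ((j+1) mod 5 + 1) mod 5" "j = ((j+1) mod 5 + 4) mod 5"
     "(j+1) mod 5 \<noteq> (j + 4) mod 5" using v_m(2) by (elim less5E; simp)+
  then show ?case using v_m by (auto simp: MInv_def)
next
  case (v_c1 N u j)
  have "(j+2) mod 5 \<noteq> (j+1) mod 5" "(j+2) mod 5 \<noteq> (j+4) mod 5" using v_c1(2) by (elim less5E; simp)+
  then show ?case by (auto simp: MInv_def)
next
  case (v_c2 N u j)
  have "(j+4) mod 5 \<noteq> ((j+1) mod 5 + 1) mod 5" "(j+4) mod 5 \<noteq> ((j+1) mod 5 + 4) mod 5" using v_c2(2) by (elim less5E; simp)+
  then show ?case by (auto simp: MInv_def)
qed auto




lemma wword_Suc: "wword (Suc n) w \<Longrightarrow> \<exists>x a. w = x @ [a] \<and> wword n x \<and> a < 6"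
  by (cases w rule: rev_cases) (auto simp: wword_def)

lemma MInv1: "a < 5 \<Longrightarrow> MInv n (x @ [a], (a+1) mod 5) = {Vc n (x, a), Vc n (x, (a+1) mod 5)}"
  by (simp add: MInv_def)

lemma MInv4: "a < 5 \<Longrightarrow> MInv n (x @ [a], (a+4) mod 5) = {Vc n (x, (a+4) mod 5), Vc n (x, a)}"
proof -
  assume a: "a < 5"
  have "(a+4) mod 5 \<noteq> (a+1) mod 5" using a by (elim less5E; simp)
  then show ?thesis using a unfolding MInv_def by simp
qed

lemma Inv_cls: "a < 5 \<Longrightarrow> l < 5 \<Longrightarrow> l' < 5 \<Longrightarrow> a \<noteq> l \<Longrightarrow> a \<noteq> l' \<Longrightarrow> l \<noteq> l' \<Longrightarrow>
   Inv (x @ [a], l) = Inv (x @ [a], l') \<Longrightarrow>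
   (l = (a+1) mod 5 \<and> l' = (a+4) mod 5) \<or> (l = (a+4) mod 5 \<and> l' = (a+1) mod 5)"
  apply (simp add: Inv_snoc split: if_split_asm)
  apply (elim less5E; simp)
  done

lemma dist_level: "wword n w \<Longrightarrow> l < 5 \<Longrightarrow> l' < 5 \<Longrightarrow> vglue n (w, l) (w, l') \<Longrightarrow> l = l'"
proof (induction n arbitrary: w l l')
  case 0
  then show ?case using vglue0 by auto
next
  case (Suc n)
  obtain x a where w: "w = x @ [a]" "wword n x" "a < 6"
    using wword_Suc[OF Suc.prems(1)] by blast
  have D: "i = j" if "i < 5" "j < 5" "Vc n (x, i) = Vc n (x, j)" for i j
  proof -
    have "vglue n (x, i) (x, j)" using Vc_eqD[OF that(3)] w(2) that(2) by simp
    then show ?thesis using Suc.IH[OF w(2) that(1,2)] by blast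
  qed
  have g: "vglue (Suc n) (x @ [a], l) (x @ [a], l')" using Suc.prems w by simp
  have o: "(a = l) = (a = l')" using oldc_inv[OF g] by (simp add: oldc_def)
  have I: "Inv (x @ [a], l) = Inv (x @ [a], l')" using Inv_inv[OF g] .
  have M: "MInv n (x @ [a], l) = MInv n (x @ [a], l')" using MInv_inv[OF g refl] .
  show "l = l'"
  proof (rule ccontr)
    assume ne: "l \<noteq> l'"
    then have al: "a \<noteq> l" "a \<noteq> l'" using o by auto
    show False
    proof (cases "a = 5")
      case True
      then show False using I al ne Suc.prems(2,3) by (simp add: Inv_snoc) (elim less5E; simp)
    next
      case False
      then have "a < 5" using w by auto
      then have c: "(l = (a+1) mod 5 \<and> l' = (a+4) mod 5) \<or> (l = (a+4) mod 5 \<and> l' = (a+1) mod 5)"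
        using Inv_cls[OF _ Suc.prems(2,3) al ne I] by auto
      have MM: "{Vc n (x, a), Vc n (x, (a+1) mod 5)} = {Vc n (x, (a+4) mod 5), Vc n (x, a)}"
        using c M MInv1[OF \<open>a<5\<close>, of n x] MInv4[OF \<open>a<5\<close>, of n x] by (elim disjE conjE) simp_all
      have "Vc n (x, (a+1) mod 5) \<in> {Vc n (x, (a+4) mod 5), Vc n (x, a)}"
        using MM by (metis insertI1 insert_commute)
      then have "Vc n (x, (a+1) mod 5) = Vc n (x, (a+4) mod 5) \<or> Vc n (x, (a+1) mod 5) = Vc n (x, a)"
        by simp
      moreover have "(a+1) mod 5 \<noteq> (a+4) mod 5" "(a+1) mod 5 \<noteq> a"
        using \<open>a<5\<close> by (elim less5E; simp)+
      moreover have "(a+1) mod 5 < 5" "(a+4) mod 5 < 5" by simp_all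
      ultimately show False using D[of "(a+1) mod 5" "(a+4) mod 5"] D[of "(a+1) mod 5" a] \<open>a<5\<close>
        by (elim disjE) simp_all
    qed
  qed
qed




lemma vglue_len: "vglue n a b \<Longrightarrow> length (fst a) = n \<and> length (fst b) = n"
  using vglue_wf by (auto simp: wword_def)

lemma vglue_liftk: "vglue n a b \<Longrightarrow>
   vglue (k + n) (replicate k 5 @ fst a, snd a) (replicate k 5 @ fst b, snd b)"
proof (induction k)
  case 0 then show ?case by simp
next
  case (Suc k)
  then show ?case using vglue_lift5[OF Suc.IH[OF Suc.prems]] by simp
qed

lemma liftc_pair: "liftc n (w, l) = (replicate (n - length w) 5 @ w, l)"
  by (simp add: liftc_def)

lemma vglue_mono: "vglue n (liftc n a) (liftc n b) \<Longrightarrow> length (fst a) \<le> n \<Longrightarrow> length (fst b) \<le> n \<Longrightarrow>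
   n \<le> N \<Longrightarrow> vglue N (liftc N a) (liftc N b)"
proof -
  assume g: "vglue n (liftc n a) (liftc n b)" and la: "length (fst a) \<le> n" and lb: "length (fst b) \<le> n"
    and nN: "n \<le> N"
  have "vglue ((N - n) + n) (replicate (N - n) 5 @ fst (liftc n a), snd (liftc n a))
     (replicate (N - n) 5 @ fst (liftc n b), snd (liftc n b))" by (rule vglue_liftk[OF g])
  moreover have "replicate (N - n) 5 @ fst (liftc n a) = replicate (N - length (fst a)) 5 @ fst a"
  proof -
    have "N - length (fst a) = (N - n) + (n - length (fst a))" using la nN by simp
    then show ?thesis by (metis liftc_def fst_conv append_assoc replicate_add)
  qed
  moreover have "replicate (N - n) 5 @ fst (liftc n b) = replicate (N - length (fst b)) 5 @ fst b"
  proof -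
    have "N - length (fst b) = (N - n) + (n - length (fst b))" using lb nN by simp
    then show ?thesis by (metis liftc_def fst_conv append_assoc replicate_add)
  qed
  moreover have "snd (liftc n a) = snd a" "snd (liftc n b) = snd b" by (simp_all add: liftc_def)
  moreover have "N - n + n = N" using nN by simp
  ultimately show ?thesis unfolding liftc_def[of N] by (simp only: fst_conv snd_conv)
qed

lemma vrelK_refl: "(\<forall>x\<in>set w. x < 6) \<Longrightarrow> l < 5 \<Longrightarrow> vrelK (w, l) (w, l)"
  unfolding vrelK_def
  by (rule exI[of _ "length w"]) (auto simp: liftc_def wword_def intro: vglue.v_refl)

lemma vrelK_sym: "vrelK a b \<Longrightarrow> vrelK b a"
  unfolding vrelK_def using vglue.v_sym by blast

lemma vrelK_trans: "vrelK a b \<Longrightarrow> vrelK b c \<Longrightarrow> vrelK a c"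
proof -
  assume "vrelK a b" "vrelK b c"
  then obtain n1 n2 where 1: "length (fst a) \<le> n1" "length (fst b) \<le> n1" "vglue n1 (liftc n1 a) (liftc n1 b)"
    and 2: "length (fst b) \<le> n2" "length (fst c) \<le> n2" "vglue n2 (liftc n2 b) (liftc n2 c)"
    unfolding vrelK_def by blast
  let ?N = "max n1 n2"
  have "vglue ?N (liftc ?N a) (liftc ?N b)" using vglue_mono[OF 1(3) 1(1,2)] by simp
  moreover have "vglue ?N (liftc ?N b) (liftc ?N c)" using vglue_mono[OF 2(3) 2(1,2)] by simp
  ultimately show "vrelK a c" unfolding vrelK_def using 1 2
    by (intro exI[of _ ?N]) (auto intro: vglue.v_trans)
qed

lemma vcls_eq_iff: "(\<forall>x\<in>set g. x < 6) \<Longrightarrow> m < 5 \<Longrightarrow> (\<forall>x\<in>set f. x < 6) \<Longrightarrow> l < 5 \<Longrightarrow>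
   (vcls (f, l) = vcls (g, m)) = vrelK (f, l) (g, m)"
proof
  assume "(\<forall>x\<in>set g. x < 6)" "m < 5" "vcls (f, l) = vcls (g, m)"
  then show "vrelK (f, l) (g, m)" using vrelK_refl unfolding vcls_def by blast
next
  assume "vrelK (f, l) (g, m)"
  then show "vcls (f, l) = vcls (g, m)" unfolding vcls_def
    using vrelK_sym vrelK_trans by blast
qed

lemma stripT_rep: "l \<noteq> 5 \<Longrightarrow> stripT l (replicate k 5 @ w) =
   (if stripT l w = [] then replicate k 5 else replicate k 5 @ stripT l w)"
  by (auto simp: stripT_def dropWhile_append)

lemma canon_rep[simp]: "canon (replicate k 5 @ u) = canon u"
  by (induction k) (simp_all add: canon_def)

lemma Inv_lift: "l < 5 \<Longrightarrow> Inv (replicate k 5 @ w, l) = Inv (w, l)"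
proof -
  assume l: "l < 5"
  show ?thesis
  proof (cases "stripT l w = []")
    case True
    then have "stripT l (replicate k 5 @ w) = replicate k 5" using l by (simp add: stripT_rep)
    then show ?thesis using l True by (cases k) (auto simp: Inv_def InvW_def canon_def dest: in_set_butlastD)
  next
    case False
    then show ?thesis using l by (auto simp: Inv_def InvW_def stripT_rep Let_def butlast_append)
  qed
qed

lemma oldc_lift: "l < 5 \<Longrightarrow> oldc (replicate k 5 @ w, l) = oldc (w, l)"
  by (cases "w = []"; cases k) (auto simp: oldc_def)

lemma vrelK_Inv: "vrelK a b \<Longrightarrow> Inv a = Inv b \<and> oldc a = oldc b"
proof -
  assume "vrelK a b"
  then obtain n where g: "vglue n (liftc n a) (liftc n b)" unfolding vrelK_def by blast
  have l: "snd a < 5" "snd b < 5" using vglue_wf[OF g] by (auto simp: liftc_def)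
  have "Inv (liftc n a) = Inv (liftc n b)" "oldc (liftc n a) = oldc (liftc n b)"
    using Inv_inv[OF g] oldc_inv[OF g] by auto
  then show ?thesis using l Inv_lift oldc_lift
    by (metis liftc_def prod.collapse)
qed

lemma vrelK_up: "vrelK (x, l) (y, m) \<Longrightarrow> vrelK (x @ [l], l) (y @ [m], m)"
proof -
  assume "vrelK (x, l) (y, m)"
  then obtain n where n: "length x \<le> n" "length y \<le> n"
    "vglue n (replicate (n - length x) 5 @ x, l) (replicate (n - length y) 5 @ y, m)"
    unfolding vrelK_def liftc_def by auto
  have "vglue (Suc n) ((replicate (n - length x) 5 @ x) @ [l], l) ((replicate (n - length y) 5 @ y) @ [m], m)"
    by (rule vglue.v_old[OF n(3)])
  then show ?thesis unfolding vrelK_def liftc_def using n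
    by (intro exI[of _ "Suc n"]) auto
qed

lemma vrelK_down: "vrelK (x @ [l], l) (y @ [m], m) \<Longrightarrow> vrelK (x, l) (y, m)"
proof -
  assume "vrelK (x @ [l], l) (y @ [m], m)"
  then obtain N where n: "Suc (length x) \<le> N" "Suc (length y) \<le> N"
    "vglue N (replicate (N - Suc (length x)) 5 @ x @ [l], l) (replicate (N - Suc (length y)) 5 @ y @ [m], m)"
    unfolding vrelK_def liftc_def by auto
  obtain n where N: "N = Suc n" using n(1) by (cases N) auto
  have "vglue n (butlast (replicate (N - Suc (length x)) 5 @ x @ [l]), l)
                (butlast (replicate (N - Suc (length y)) 5 @ y @ [m]), m)"
    using vglue_down[OF n(3) N] by (simp add: oldc_def)
  then have "vglue n (replicate (n - length x) 5 @ x, l) (replicate (n - length y) 5 @ y, m)"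
    using N by (simp add: butlast_append)
  then show ?thesis unfolding vrelK_def liftc_def using n N
    by (intro exI[of _ n]) auto
qed

lemma dist_K: "(\<forall>x\<in>set f. x < 6) \<Longrightarrow> l < 5 \<Longrightarrow> l' < 5 \<Longrightarrow> vrelK (f, l) (f, l') \<Longrightarrow> l = l'"
proof -
  assume f: "\<forall>x\<in>set f. x < 6" and l: "l < 5" "l' < 5" and r: "vrelK (f, l) (f, l')"
  then obtain n where n: "length f \<le> n" "vglue n (replicate (n - length f) 5 @ f, l) (replicate (n - length f) 5 @ f, l')"
    unfolding vrelK_def liftc_def by auto
  have "wword n (replicate (n - length f) 5 @ f)" using f n(1) by (auto simp: wword_def)
  then show ?thesis using dist_level[OF _ l n(2)] by simp
qed




definition lastl :: "nat list \<Rightarrow> nat" where "lastl f = (if f = [] then 5 else last f)"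
definition child :: "nat list \<Rightarrow> nat \<Rightarrow> nat list" where
  "child x b = (if x = [] \<and> b = 5 then [] else x @ [b])"

lemma KF_decomp: "f \<in> KF \<Longrightarrow> f = child (butlast f) (lastl f) \<and> butlast f \<in> KF \<and> lastl f < 6"
proof (cases f rule: rev_cases)
  case Nil
  then show ?thesis by (simp add: child_def lastl_def KF_def)
next
  case (snoc ys y)
  assume f: "f \<in> KF"
  then have y6: "y < 6" and ys6: "\<forall>x\<in>set ys. x < 6" using snoc by (auto simp: KF_def)
  have hd: "ys = [] \<or> hd ys \<noteq> 5" using f snoc by (cases ys) (auto simp: KF_def)
  have "\<not> (ys = [] \<and> y = 5)" using f snoc by (auto simp: KF_def)
  then show ?thesis using snoc y6 ys6 hd by (auto simp: child_def lastl_def KF_def)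
qed

lemma child_KF: "x \<in> KF \<Longrightarrow> b < 6 \<Longrightarrow> child x b \<in> KF"
  by (cases x) (auto simp: child_def KF_def)

lemma child_par[simp]: "butlast (child x b) = x"
  by (simp add: child_def)

lemma child_last[simp]: "lastl (child x b) = b"
  by (simp add: child_def lastl_def)

lemma child_snoc: "b \<noteq> 5 \<Longrightarrow> child x b = x @ [b]"
  by (simp add: child_def)

lemma canon_KF: "x \<in> KF \<Longrightarrow> canon x = x"
  by (cases x) (auto simp: canon_def KF_def)

lemma KF_letters: "f \<in> KF \<Longrightarrow> \<forall>x\<in>set f. x < 6"
  by (simp add: KF_def)

lemma P1: "x \<in> KF \<Longrightarrow> a < 5 \<Longrightarrow> vrelK (child x 5, (a+1) mod 5) (x @ [a], (a+2) mod 5)"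
proof -
  assume x: "x \<in> KF" and a: "a < 5"
  have w: "wword (length x) x" using x by (simp add: wword_def KF_def)
  have g: "vglue (Suc (length x)) (x @ [5], (a + 1) mod 5) (x @ [a], (a + 2) mod 5)"
    by (rule vglue.v_c1[OF w a])
  have l: "liftc (Suc (length x)) (child x 5, l) = (x @ [5], l)" for l
    by (cases x) (auto simp: liftc_def child_def)
  have l2: "liftc (Suc (length x)) (x @ [a], l) = (x @ [a], l)" for l
    by (simp add: liftc_def)
  have "vglue (Suc (length x)) (liftc (Suc (length x)) (child x 5, (a+1) mod 5))
     (liftc (Suc (length x)) (x @ [a], (a+2) mod 5))" unfolding l l2 by (rule g)
  moreover have "length (child x 5) \<le> Suc (length x)" by (simp add: child_def)
  ultimately show ?thesis unfolding vrelK_def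
    by (intro exI[of _ "Suc (length x)"]) simp
qed

lemma Inv_cen: "g \<in> KF \<Longrightarrow> lastl g = 5 \<Longrightarrow> l < 5 \<Longrightarrow>
   Inv (g, l) = Some (butlast g, (l+4) mod 5) \<and> \<not> oldc (g, l)"
proof -
  assume g: "g \<in> KF" "lastl g = 5" and l: "l < 5"
  show ?thesis
  proof (cases "g = []")
    case True
    then show ?thesis by (simp add: Inv_def InvW_def stripT_def oldc_def)
  next
    case False
    have d: "g = butlast g @ [5]" using False g(2) by (metis lastl_def append_butlast_last_id)
    have c: "canon (butlast g) = butlast g" using KF_decomp[OF g(1)] canon_KF by blast
    have "Inv (butlast g @ [5], l) = Some (canon (butlast g), (l+4) mod 5)"
      using l by (simp add: Inv_snoc)
    moreover have "\<not> oldc (butlast g @ [5], l)" using l by (simp add: oldc_def)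
    ultimately show ?thesis using d c by metis
  qed
qed

lemma Inv2: "a < 5 \<Longrightarrow> Inv (x @ [a], (a+2) mod 5) = Some (canon x, a)"
  by (elim less5E) (simp_all add: Inv_snoc)

lemma mod84': "(((a::nat) + 4) mod 5 + 4) mod 5 = (a+3) mod 5"
proof -
  have r: "a mod 5 < 5" by simp
  have "(((a::nat) + 4) mod 5 + 4) mod 5 = ((a mod 5 + 4) mod 5 + 4) mod 5" by (simp add: mod_add_left_eq)
  moreover have "(a+3) mod 5 = (a mod 5 + 3) mod 5" by (simp add: mod_add_left_eq)
  moreover have "((a mod 5 + 4) mod 5 + 4) mod 5 = (a mod 5 + 3) mod 5" using r by (elim less5E; simp)
  ultimately show ?thesis by simp
qed

lemma Inv_labels: "Inv (w, m) = Some (u, j) \<Longrightarrow> m < 5 \<Longrightarrow>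
   m = (j+1) mod 5 \<or> m = (j+2) mod 5 \<or> m = (j+4) mod 5"
  unfolding Inv_def InvW_def Let_def
  apply (auto split: if_split_asm simp: mod84')
  apply (elim less5E; simp)+
  done

definition Cen :: "nat list \<Rightarrow> bool" where
  "Cen f = (\<forall>l<5. \<exists>g\<in>KF. vrelK (f, l) (g, (l+1) mod 5))"

definition Qi :: "nat \<Rightarrow> nat list \<Rightarrow> bool" where
  "Qi i f = (\<exists>g\<in>KF. Cen g \<and> vrelK (f, (i+2) mod 5) (g, (i+1) mod 5))"

lemma Cen_iff: "f \<in> KF \<Longrightarrow> Cen f = (lastl f = 5)"
proof
  assume f: "f \<in> KF" and "lastl f = 5"
  then have fe: "f = child (butlast f) 5" "butlast f \<in> KF" using KF_decomp[OF f] by auto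
  show "Cen f" unfolding Cen_def
  proof (intro allI impI)
    fix l :: nat assume l: "l < 5"
    let ?a = "(l+4) mod 5"
    have e: "(?a + 1) mod 5 = l" "(?a + 2) mod 5 = (l+1) mod 5" using l by (elim less5E; simp)+
    have "vrelK (f, l) (butlast f @ [?a], (l+1) mod 5)"
      using P1[OF fe(2), of ?a] fe(1) e by simp
    moreover have "butlast f @ [?a] \<in> KF" using child_KF[OF fe(2), of ?a] by (simp add: child_snoc)
    ultimately show "\<exists>g\<in>KF. vrelK (f, l) (g, (l + 1) mod 5)" by blast
  qed
next
  assume f: "f \<in> KF" and c: "Cen f"
  show "lastl f = 5"
  proof (rule ccontr)
    assume ne: "lastl f \<noteq> 5"
    let ?i = "lastl f" and ?x = "butlast f"
    have i: "?i < 5" using KF_decomp[OF f] ne by auto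
    have fe: "f = ?x @ [?i]" using KF_decomp[OF f] ne child_snoc by metis
    have "(?i+2) mod 5 < 5" by simp
    then obtain g where g: "g \<in> KF" "vrelK (f, (?i+2) mod 5) (g, ((?i+2) mod 5 + 1) mod 5)"
      using c unfolding Cen_def by blast
    have "Inv (f, (?i+2) mod 5) = Some (canon ?x, ?i)"
      using Inv2[OF i, of ?x] by (simp only: fe[symmetric])
    then have "Inv (g, ((?i+2) mod 5 + 1) mod 5) = Some (canon ?x, ?i)"
      using vrelK_Inv[OF g(2)] by simp
    from Inv_labels[OF this] show False using i by (elim less5E; simp)
  qed
qed

lemma Q_iff: "f \<in> KF \<Longrightarrow> i < 5 \<Longrightarrow> Qi i f = (lastl f = i)"
proof
  assume f: "f \<in> KF" and i: "i < 5" and "lastl f = i"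
  then have fe: "f = butlast f @ [i]" "butlast f \<in> KF" using KF_decomp[OF f] child_snoc
    by (metis less_not_refl3)+
  have "vrelK (child (butlast f) 5, (i+1) mod 5) (f, (i+2) mod 5)"
    using P1[OF fe(2) i] fe(1) by simp
  moreover have "child (butlast f) 5 \<in> KF" "Cen (child (butlast f) 5)"
    using child_KF[OF fe(2)] Cen_iff child_last by auto
  ultimately show "Qi i f" unfolding Qi_def using vrelK_sym by blast
next
  assume f: "f \<in> KF" and i: "i < 5" and q: "Qi i f"
  obtain g where g: "g \<in> KF" "Cen g" "vrelK (f, (i+2) mod 5) (g, (i+1) mod 5)"
    using q unfolding Qi_def by blast
  have lg: "lastl g = 5" using Cen_iff g by auto
  have ig: "Inv (g, (i+1) mod 5) = Some (butlast g, ((i+1) mod 5 + 4) mod 5)"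
     "\<not> oldc (g, (i+1) mod 5)" using Inv_cen[OF g(1) lg] by auto
  have e1: "((i+1) mod 5 + 4) mod 5 = i" using i by (elim less5E; simp)
  have IF: "Inv (f, (i+2) mod 5) = Some (butlast g, i)" "\<not> oldc (f, (i+2) mod 5)"
    using vrelK_Inv[OF g(3)] ig e1 by auto
  show "lastl f = i"
  proof (cases "lastl f = 5")
    case True
    have "Inv (f, (i+2) mod 5) = Some (butlast f, ((i+2) mod 5 + 4) mod 5)"
      using Inv_cen[OF f True] by simp
    then show ?thesis using IF i by (elim less5E; simp)
  next
    case False
    let ?a = "lastl f" and ?x = "butlast f"
    have a: "?a < 5" using KF_decomp[OF f] False by auto
    have fe: "f = ?x @ [?a]" using KF_decomp[OF f] False child_snoc by metis
    have na: "?a \<noteq> (i+2) mod 5" using IF(2) fe by (metis oldc_def fst_conv snd_conv last_snoc snoc_eq_iff_butlast)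
    have "Inv (?x @ [?a], (i+2) mod 5) = Some (butlast g, i)" using IF(1) fe by simp
    then show ?thesis using na a i Inv_snoc[OF na, of ?x] False
      by (auto split: if_split_asm) (elim less5E; simp)+
  qed
qed




definition aut :: "(nat list \<Rightarrow> nat list) \<Rightarrow> bool" where
  "aut \<theta> \<longleftrightarrow> (\<forall>f\<in>KF. \<theta> f \<in> KF) \<and> (\<forall>g\<in>KF. \<exists>f\<in>KF. \<theta> f = g) \<and>
     (\<forall>f\<in>KF. \<forall>g\<in>KF. \<forall>l<5. \<forall>m<5. vrelK (f, l) (g, m) = vrelK (\<theta> f, l) (\<theta> g, m))"

lemma autD: "aut \<theta> \<Longrightarrow> f \<in> KF \<Longrightarrow> \<theta> f \<in> KF"
  "aut \<theta> \<Longrightarrow> g \<in> KF \<Longrightarrow> \<exists>f\<in>KF. \<theta> f = g"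
  "aut \<theta> \<Longrightarrow> f \<in> KF \<Longrightarrow> g \<in> KF \<Longrightarrow> l < 5 \<Longrightarrow> m < 5 \<Longrightarrow>
     vrelK (\<theta> f, l) (\<theta> g, m) = vrelK (f, l) (g, m)"
  unfolding aut_def by blast+

lemma aut_Cen: "aut \<theta> \<Longrightarrow> f \<in> KF \<Longrightarrow> Cen (\<theta> f) = Cen f"
proof
  assume a: "aut \<theta>" and f: "f \<in> KF" and c: "Cen f"
  show "Cen (\<theta> f)" unfolding Cen_def
  proof (intro allI impI)
    fix l :: nat assume l: "l < 5"
    obtain g where g: "g \<in> KF" "vrelK (f, l) (g, (l+1) mod 5)" using c l unfolding Cen_def by blast
    have "vrelK (\<theta> f, l) (\<theta> g, (l + 1) mod 5)"
      using g(2) autD(3)[OF a f g(1) l, of "(l+1) mod 5"] by simp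
    then show "\<exists>g\<in>KF. vrelK (\<theta> f, l) (g, (l + 1) mod 5)"
      using autD(1)[OF a g(1)] by blast
  qed
next
  assume a: "aut \<theta>" and f: "f \<in> KF" and c: "Cen (\<theta> f)"
  show "Cen f" unfolding Cen_def
  proof (intro allI impI)
    fix l :: nat assume l: "l < 5"
    obtain g' where g': "g' \<in> KF" "vrelK (\<theta> f, l) (g', (l+1) mod 5)" using c l unfolding Cen_def by blast
    obtain g where g: "g \<in> KF" "\<theta> g = g'" using autD(2)[OF a g'(1)] by blast
    have "vrelK (f, l) (g, (l + 1) mod 5)"
      using g g' autD(3)[OF a f g(1) l, of "(l+1) mod 5"] by simp
    then show "\<exists>g\<in>KF. vrelK (f, l) (g, (l + 1) mod 5)" using g(1) by blast
  qed
qed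

lemma aut_Q: "aut \<theta> \<Longrightarrow> f \<in> KF \<Longrightarrow> Qi i (\<theta> f) = Qi i f"
proof
  assume a: "aut \<theta>" and f: "f \<in> KF" and c: "Qi i f"
  obtain g where g: "g \<in> KF" "Cen g" "vrelK (f, (i+2) mod 5) (g, (i+1) mod 5)" using c unfolding Qi_def by blast
  have "vrelK (\<theta> f, (i+2) mod 5) (\<theta> g, (i+1) mod 5)"
    using g(3) autD(3)[OF a f g(1), of "(i+2) mod 5" "(i+1) mod 5"] by simp
  then show "Qi i (\<theta> f)" unfolding Qi_def
    using autD(1)[OF a g(1)] aut_Cen[OF a g(1)] g(2) by blast
next
  assume a: "aut \<theta>" and f: "f \<in> KF" and c: "Qi i (\<theta> f)"
  obtain g' where g': "g' \<in> KF" "Cen g'" "vrelK (\<theta> f, (i+2) mod 5) (g', (i+1) mod 5)"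
    using c unfolding Qi_def by blast
  obtain g where g: "g \<in> KF" "\<theta> g = g'" using autD(2)[OF a g'(1)] by blast
  have "vrelK (f, (i+2) mod 5) (g, (i+1) mod 5)"
    using g g'(3) autD(3)[OF a f g(1), of "(i+2) mod 5" "(i+1) mod 5"] by simp
  then show "Qi i f" unfolding Qi_def
    using g(1) aut_Cen[OF a g(1)] g g'(2) by blast
qed

lemma aut_last: "aut \<theta> \<Longrightarrow> f \<in> KF \<Longrightarrow> lastl (\<theta> f) = lastl f"
proof -
  assume a: "aut \<theta>" and f: "f \<in> KF"
  have tf: "\<theta> f \<in> KF" using autD(1)[OF a f] .
  have l6: "lastl f < 6" using KF_decomp[OF f] by auto
  show ?thesis
  proof (cases "lastl f = 5")
    case True
    then show ?thesis using Cen_iff[OF f] Cen_iff[OF tf] aut_Cen[OF a f] by simp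
  next
    case False
    then have "lastl f < 5" using l6 by simp
    then show ?thesis using Q_iff[OF f] Q_iff[OF tf] aut_Q[OF a f] by metis
  qed
qed

lemma aut_child: "aut \<theta> \<Longrightarrow> x \<in> KF \<Longrightarrow> b < 6 \<Longrightarrow>
   \<theta> (child x b) = child (butlast (\<theta> (child x 5))) b"
proof -
  assume a: "aut \<theta>" and x: "x \<in> KF" and b: "b < 6"
  have cb: "child x b \<in> KF" using child_KF[OF x b] .
  have tb: "\<theta> (child x b) \<in> KF" using autD(1)[OF a cb] .
  have lb: "lastl (\<theta> (child x b)) = b" using aut_last[OF a cb] by simp
  have eb: "\<theta> (child x b) = child (butlast (\<theta> (child x b))) b" using KF_decomp[OF tb] lb by simp
  show ?thesis
  proof (cases "b = 5")
    case True then show ?thesis using eb by simp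
  next
    case False
    then have b5: "b < 5" using b by simp
    have c5: "child x 5 \<in> KF" using child_KF[OF x] by simp
    have t5: "\<theta> (child x 5) \<in> KF" using autD(1)[OF a c5] .
    have l5: "lastl (\<theta> (child x 5)) = 5" using aut_last[OF a c5] by simp
    have r: "vrelK (child x 5, (b+1) mod 5) (child x b, (b+2) mod 5)"
      using P1[OF x b5] child_snoc[OF False] by simp
    then have r': "vrelK (\<theta> (child x 5), (b+1) mod 5) (\<theta> (child x b), (b+2) mod 5)"
      using autD(3)[OF a c5 cb] by simp
    have i1: "Inv (\<theta> (child x 5), (b+1) mod 5) = Some (butlast (\<theta> (child x 5)), b)"
      using Inv_cen[OF t5 l5, of "(b+1) mod 5"] b5 by (elim less5E; simp)
    let ?p = "butlast (\<theta> (child x b))"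
    have pk: "?p \<in> KF" using KF_decomp[OF tb] by auto
    have "\<theta> (child x b) = ?p @ [b]" using eb child_snoc[OF False] by metis
    then have i2: "Inv (\<theta> (child x b), (b+2) mod 5) = Some (?p, b)"
      using Inv2[OF b5, of ?p] canon_KF[OF pk] by simp
    have "butlast (\<theta> (child x 5)) = ?p" using vrelK_Inv[OF r'] i1 i2 by simp
    then show ?thesis using eb by simp
  qed
qed

lemma aut_prime: "aut \<theta> \<Longrightarrow> aut (\<lambda>x. butlast (\<theta> (child x 5)))"
proof -
  assume a: "aut \<theta>"
  let ?t = "\<lambda>x. butlast (\<theta> (child x 5))"
  have 1: "?t x \<in> KF" if x: "x \<in> KF" for x
    using KF_decomp[OF autD(1)[OF a child_KF[OF x, of 5]]] by simp
  have 2: "\<exists>f\<in>KF. ?t f = g" if g: "g \<in> KF" for g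
  proof -
    obtain h where h: "h \<in> KF" "\<theta> h = child g 5" using autD(2)[OF a child_KF[OF g, of 5]] by auto
    have "lastl h = 5" using aut_last[OF a h(1)] h(2) by simp
    then have hh: "h = child (butlast h) 5" "butlast h \<in> KF" using KF_decomp[OF h(1)] by auto
    have "?t (butlast h) = butlast (\<theta> h)" using hh(1) by metis
    also have "\<dots> = g" using h(2) by simp
    finally show ?thesis using hh(2) by blast
  qed
  have 3: "vrelK (x, l) (y, m) = vrelK (?t x, l) (?t y, m)"
    if x: "x \<in> KF" and y: "y \<in> KF" and l: "l < 5" and m: "m < 5" for x y l m
  proof -
    have ln: "l \<noteq> 5" "m \<noteq> 5" using l m by auto
    have "vrelK (x, l) (y, m) = vrelK (x @ [l], l) (y @ [m], m)" using vrelK_up[of x l y m] vrelK_down[of x l y m] by (rule iffI)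
    also have "\<dots> = vrelK (child x l, l) (child y m, m)" using child_snoc ln by simp
    also have "\<dots> = vrelK (\<theta> (child x l), l) (\<theta> (child y m), m)"
      using autD(3)[OF a child_KF[OF x] child_KF[OF y] l m] l m by simp
    also have "\<dots> = vrelK (child (?t x) l, l) (child (?t y) m, m)"
    proof -
      have "l < 6" "m < 6" using l m by auto
      then show ?thesis using aut_child[OF a x, of l] aut_child[OF a y, of m] by simp
    qed
    also have "\<dots> = vrelK (?t x @ [l], l) (?t y @ [m], m)" using child_snoc ln by simp
    also have "\<dots> = vrelK (?t x, l) (?t y, m)" using vrelK_up[of "?t x" l "?t y" m] vrelK_down[of "?t x" l "?t y" m] by (rule iffI[rotated])
    finally show ?thesis .
  qed
  show ?thesis unfolding aut_def
  proof (intro conjI ballI allI impI)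
    show "\<And>f. f \<in> KF \<Longrightarrow> ?t f \<in> KF" by (rule 1)
    show "\<And>g. g \<in> KF \<Longrightarrow> \<exists>f\<in>KF. ?t f = g" by (rule 2)
    show "\<And>f g l m. f \<in> KF \<Longrightarrow> g \<in> KF \<Longrightarrow> l < 5 \<Longrightarrow> m < 5 \<Longrightarrow>
       vrelK (f, l) (g, m) = vrelK (?t f, l) (?t g, m)" by (rule 3)
  qed
qed

lemma aut_nil: "aut \<theta> \<Longrightarrow> \<theta> [] = []"
proof -
  have c: "child [] 5 = []" by (simp add: child_def)
  have "\<forall>\<theta>. aut \<theta> \<longrightarrow> length (\<theta> []) = n \<longrightarrow> \<theta> [] = []" for n
  proof (induction n rule: less_induct)
    case (less n)
    show ?case
    proof (intro allI impI)
      fix \<theta> assume a: "aut \<theta>" and len: "length (\<theta> []) = n"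
      have nil: "[] \<in> KF" by (simp add: KF_def)
      let ?p = "butlast (\<theta> [])"
      have e: "\<theta> [] = child ?p 5"
        using aut_child[OF a nil, of 5] unfolding c by simp
      show "\<theta> [] = []"
      proof (cases "?p = []")
        case True then show ?thesis using e c by metis
      next
        case False
        then have "\<theta> [] = ?p @ [5]" using e child_def by metis
        then have "length ?p < n" using len by (metis length_append_singleton lessI)
        moreover have "(\<lambda>x. butlast (\<theta> (child x 5))) [] = ?p" using c by simp
        ultimately have "?p = []"
          using less.IH[rule_format, OF _ aut_prime[OF a]] by metis
        then show ?thesis using False by simp
      qed
    qed
  qed
  then show "aut \<theta> \<Longrightarrow> \<theta> [] = []" by blast
qed

lemma aut_id: "f \<in> KF \<Longrightarrow> aut \<theta> \<Longrightarrow> \<theta> f = f"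
proof (induction "length f" arbitrary: f \<theta> rule: less_induct)
  case less
  show ?case
  proof (cases "f = []")
    case True then show ?thesis using aut_nil[OF less.prems(2)] by simp
  next
    case False
    have d: "f = child (butlast f) (lastl f)" "butlast f \<in> KF" "lastl f < 6"
      using KF_decomp[OF less.prems(1)] by auto
    have "\<theta> f = child (butlast (\<theta> (child (butlast f) 5))) (lastl f)"
      using aut_child[OF less.prems(2) d(2,3)] d(1) by metis
    moreover have "butlast (\<theta> (child (butlast f) 5)) = butlast f"
      using less.hyps[of "butlast f" "\<lambda>x. butlast (\<theta> (child x 5))"] False d(2) aut_prime[OF less.prems(2)]
      by simp
    ultimately show ?thesis using d(1) by metis
  qed
qed




lemma erelK_refl: "g \<in> KF \<Longrightarrow> t < 5 \<Longrightarrow> erelK (g, t) (g, t)"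
  unfolding erelK_def
  by (rule exI[of _ "length g"]) (simp add: liftc_def wword_def KF_def)

lemma rep_canon: "x \<in> KF \<Longrightarrow> y \<in> KF \<Longrightarrow> replicate p 5 @ x = replicate q 5 @ y \<Longrightarrow> x = y"
  by (metis canon_KF canon_rep)

lemma vcls_KF: "f \<in> KF \<Longrightarrow> g \<in> KF \<Longrightarrow> l < 5 \<Longrightarrow> m < 5 \<Longrightarrow>
   (vcls (f, l) = vcls (g, m)) = vrelK (f, l) (g, m)"
  using vcls_eq_iff KF_letters by blast

lemma ecls_ends: "f \<in> KF \<Longrightarrow> g \<in> KF \<Longrightarrow> s < 5 \<Longrightarrow> t < 5 \<Longrightarrow> ecls (f, s) = ecls (g, t) \<Longrightarrow>
   {vcls (g, t), vcls (g, (t+1) mod 5)} = {vcls (f, s), vcls (f, (s+1) mod 5)}"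
proof -
  assume f: "f \<in> KF" and g: "g \<in> KF" and s: "s < 5" and t: "t < 5" and e: "ecls (f, s) = ecls (g, t)"
  have "(g, t) \<in> ecls (g, t)" using erelK_refl[OF g t] by (simp add: ecls_def)
  then have "(g, t) \<in> ecls (f, s)" using e by simp
  then have "erelK (f, s) (g, t)" by (simp add: ecls_def)
  then obtain n where n: "length f \<le> n" "length g \<le> n"
    "(liftc n (f, s) = liftc n (g, t)) \<or> glued n (liftc n (f, s)) (liftc n (g, t))"
    unfolding erelK_def by auto
  from n(3) show ?thesis
  proof
    assume "liftc n (f, s) = liftc n (g, t)"
    then have "f = g" "s = t" using rep_canon[OF f g] by (auto simp: liftc_def)
    then show ?thesis by simp
  next
    assume gl: "glued n (liftc n (f, s)) (liftc n (g, t))"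
    have "vglue n (liftc n (f, s)) (liftc n (g, (t+1) mod 5))"
      "vglue n (liftc n (f, (s+1) mod 5)) (liftc n (g, t))"
      using glued_ends[OF gl] by (simp_all add: liftc_def)
    then have "vrelK (f, s) (g, (t+1) mod 5)" "vrelK (f, (s+1) mod 5) (g, t)"
      unfolding vrelK_def using n(1,2) by auto
    then have "vcls (f, s) = vcls (g, (t+1) mod 5)" "vcls (f, (s+1) mod 5) = vcls (g, t)"
      using vcls_KF[OF f g] s t by simp_all
    then show ?thesis by auto
  qed
qed

lemma side_arith: "(s::nat) < 5 \<Longrightarrow> s' < 5 \<Longrightarrow> (s = s' \<or> s = (s'+1) mod 5) \<Longrightarrow>
   ((s+1) mod 5 = s' \<or> (s+1) mod 5 = (s'+1) mod 5) \<Longrightarrow> s = s'"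
  by (elim less5E; simp)




theorem mainTheorem5:
  assumes "cell_aut \<phi>V \<phi>E \<phi>F"
    and "decoration_preserving \<phi>V \<phi>F"
  shows "(\<forall>v\<in>KV. \<phi>V v = v) \<and> (\<forall>e\<in>KE. \<phi>E e = e) \<and> (\<forall>f\<in>KF. \<phi>F f = f)"
proof -
  have bV: "bij_betw \<phi>V KV KV" and bF: "bij_betw \<phi>F KF KF"
    and iVE: "\<forall>v\<in>KV. \<forall>e\<in>KE. incVE v e \<longleftrightarrow> incVE (\<phi>V v) (\<phi>E e)"
    and iEF: "\<forall>e\<in>KE. \<forall>f\<in>KF. incEF e f \<longleftrightarrow> incEF (\<phi>E e) (\<phi>F f)"
    using assms(1) unfolding cell_aut_def by auto
  have dec: "\<And>f l. f \<in> KF \<Longrightarrow> l < 5 \<Longrightarrow> \<phi>V (corner f l) = corner (\<phi>F f) l"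
    using assms(2) unfolding decoration_preserving_def by auto
  have cKV: "\<And>f l. f \<in> KF \<Longrightarrow> l < 5 \<Longrightarrow> corner f l \<in> KV"
    unfolding KV_def corner_def by blast
  have injV: "inj_on \<phi>V KV" using bV by (rule bij_betw_imp_inj_on)
  have a: "aut \<phi>F" unfolding aut_def
  proof (intro conjI ballI allI impI)
    show "\<And>f. f \<in> KF \<Longrightarrow> \<phi>F f \<in> KF" using bF by (rule bij_betw_apply)
    show "\<And>g. g \<in> KF \<Longrightarrow> \<exists>f\<in>KF. \<phi>F f = g" using bij_betw_imp_surj_on[OF bF] by (metis imageE)
    fix f g and l m :: nat assume f: "f \<in> KF" and g: "g \<in> KF" and l: "l < 5" and m: "m < 5"
    have f': "\<phi>F f \<in> KF" and g': "\<phi>F g \<in> KF" using bF f g by (simp_all add: bij_betw_apply)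
    have "vrelK (f, l) (g, m) = (corner f l = corner g m)"
      using vcls_KF[OF f g l m] by (simp add: corner_def)
    also have "\<dots> = (\<phi>V (corner f l) = \<phi>V (corner g m))"
      using inj_on_eq_iff[OF injV cKV[OF f l] cKV[OF g m]] by simp
    also have "\<dots> = (corner (\<phi>F f) l = corner (\<phi>F g) m)" using dec f g l m by simp
    also have "\<dots> = vrelK (\<phi>F f, l) (\<phi>F g, m)"
      using vcls_KF[OF f' g' l m] by (simp add: corner_def)
    finally show "vrelK (f, l) (g, m) = vrelK (\<phi>F f, l) (\<phi>F g, m)" .
  qed
  have F: "\<forall>f\<in>KF. \<phi>F f = f" using aut_id a by blast
  have V: "\<forall>v\<in>KV. \<phi>V v = v"
  proof
    fix v assume "v \<in> KV"
    then obtain f l where fl: "f \<in> KF" "l < 5" "v = vcls (f, l)" unfolding KV_def by blast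
    then show "\<phi>V v = v" using dec[OF fl(1,2)] F by (simp add: corner_def)
  qed
  have dist: "\<And>f a b. f \<in> KF \<Longrightarrow> a < 5 \<Longrightarrow> b < 5 \<Longrightarrow> vcls (f, a) = vcls (f, b) \<Longrightarrow> a = b"
    using vcls_KF dist_K KF_letters by blast
  have E: "\<forall>e\<in>KE. \<phi>E e = e"
  proof
    fix e assume eK: "e \<in> KE"
    then obtain f s where fs: "f \<in> KF" "s < 5" "e = ecls (f, s)" unfolding KE_def by blast
    have "incEF e f" unfolding incEF_def using fs by blast
    then have "incEF (\<phi>E e) f" using iEF eK fs(1) F by auto
    then obtain s' where s': "s' < 5" "\<phi>E e = ecls (f, s')" unfolding incEF_def by blast
    have ends: "vcls (f, k) = vcls (f, s') \<or> vcls (f, k) = vcls (f, (s'+1) mod 5)"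
      if k: "k = s \<or> k = (s+1) mod 5" for k
    proof -
      have kk: "k < 5" using k fs(2) by auto
      have vK: "vcls (f, k) \<in> KV" using cKV[OF fs(1) kk] by (simp add: corner_def)
      have "incVE (vcls (f, k)) e" unfolding incVE_def using fs k by blast
      then have "incVE (\<phi>V (vcls (f, k))) (\<phi>E e)" using iVE vK eK by blast
      then have "incVE (vcls (f, k)) (ecls (f, s'))" using V vK s'(2) by simp
      then obtain g t where gt: "g \<in> KF" "t < 5" "ecls (f, s') = ecls (g, t)"
        "vcls (f, k) = vcls (g, t) \<or> vcls (f, k) = vcls (g, (t + 1) mod 5)"
        unfolding incVE_def by blast
      have "vcls (f, k) \<in> {vcls (f, s'), vcls (f, (s'+1) mod 5)}"
        using ecls_ends[OF fs(1) gt(1) s'(1) gt(2) gt(3)] gt(4) by blast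
      then show ?thesis by simp
    qed
    have "s = s' \<or> s = (s'+1) mod 5" using ends[of s] dist[OF fs(1)] fs(2) s'(1) by auto
    moreover have "(s+1) mod 5 = s' \<or> (s+1) mod 5 = (s'+1) mod 5"
      using ends[of "(s+1) mod 5"] dist[OF fs(1), of "(s+1) mod 5"] s'(1) by auto
    ultimately have "s = s'" using side_arith fs(2) s'(1) by blast
    then show "\<phi>E e = e" using s'(2) fs(3) by simp
  qed
  show ?thesis using V E F by blast
qed


end
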